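(* Let $R$ be a commutative ring with identity and let $a\in R$ be a non-zero element with $a\notin R^{\ast}$. Consider the following conditions on $a$: (i) there exist $b\in R$ and $c\in\operatorname{Sqf} R$ such that $a=b^2c$; (ii) there exist $n\geqslant 0$ and $s_0,s_1,\dots,s_n\in\operatorname{Sqf} R$ such that $a=s_n^{2^n}s_{n-1}^{2^{n-1}}\cdots s_1^2s_0$; (iii) there exist $n\geqslant 1$, $s_1,\dots,s_n\in(\operatorname{Sqf} R)\setminus R^{\ast}$, integers $0\leqslant k_1<k_2<\dots<k_n$, and $c\in R^{\ast}$ such that $a=c\,s_n^{2^{k_n}}s_{n-1}^{2^{k_{n-1}}}\cdots s_1^{2^{k_1}}$; (iv) there exist $n\geqslant 1$ and $s_1,\dots,s_n\in\operatorname{Sqf} R$ such that $s_i\mid s_{i+1}$ for $i=1,\dots,n-1$ and $a=s_1s_2\cdots s_n$; (v) there exist $n\geqslant 1$, $s_1,\dots,s_n\in(\operatorname{Sqf} R)\setminus R^{\ast}$, integers $k_1,\dots,k_n\geqslant 1$, and $c\in R^{\ast}$ such that $s_i\mid s_{i+1}$ and $s_i\not\sim s_{i+1}$ for $i=1,\dots,n-1$, and $a=c\,s_1^{k_1}s_2^{k_2}\cdots s_n^{k_n}$; (vi) there exist $n\geqslant 1$ and $s_1,\dots,s_n\in\operatorname{Sqf} R$ such that $s_i$ and $s_j$ are relatively prime for $i\neq j$, and $a=s_1s_2^2s_3^3\cdots s_n^n$; (vii) there exist $n\geqslant 1$, $s_1,\dots,s_n\in(\operatorname{Sqf} R)\setminus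 R^{\ast}$, integers $1\leqslant k_1<k_2<\dots<k_n$, and $c\in R^{\ast}$ such that $s_i$ and $s_j$ are relatively prime for $i\neq j$, and $a=c\,s_1^{k_1}s_2^{k_2}\cdots s_n^{k_n}$. Then: (ii) implies (i); (ii) and (iii) are equivalent; (iv) and (v) are equivalent; (v) implies (vi); and (vi) and (vii) are equivalent.
   Context: All rings are commutative with identity. $R^{\ast}$ denotes the set of invertible elements of $R$. For $a,b\in R$, $a\sim b$ means $a$ and $b$ are associated, and $a\mid b$ means $a$ divides $b$. Elements $a,b$ are relatively prime if they have no common non-invertible divisor. An element $a\in R$ is square-free if it cannot be written as $a=b^2c$ with $b\in R\setminus R^{\ast}$ and $c\in R$; $\operatorname{Sqf} R$ denotes the set of square-free elements of $R$. *)

theory Defs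
  imports "HOL-Computational_Algebra.Squarefree"
begin

definition assoc :: "'a::comm_ring_1 \<Rightarrow> 'a \<Rightarrow> bool" where
  "assoc a b \<longleftrightarrow> (\<exists>u. u dvd 1 \<and> a = u * b)"

definition relprime :: "'a::comm_ring_1 \<Rightarrow> 'a \<Rightarrow> bool" where
  "relprime a b \<longleftrightarrow> (\<forall>d. d dvd a \<and> d dvd b \<longrightarrow> d dvd 1)"

definition cond_i :: "'a::comm_ring_1 \<Rightarrow> bool" where
  "cond_i a \<longleftrightarrow> (\<exists>b c. squarefree c \<and> a = b^2 * c)"

definition cond_ii :: "'a::comm_ring_1 \<Rightarrow> bool" where
  "cond_ii a \<longleftrightarrow> (\<exists>(n::nat) (s::nat \<Rightarrow> 'a).
     (\<forall>i\<in>{0..n}. squarefree (s i)) \<and> a = (\<Prod>i=0..n. s i ^ (2^i)))"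

definition cond_iii :: "'a::comm_ring_1 \<Rightarrow> bool" where
  "cond_iii a \<longleftrightarrow> (\<exists>(n::nat) (s::nat \<Rightarrow> 'a) (k::nat \<Rightarrow> nat) c. n \<ge> 1 \<and>
     (\<forall>i\<in>{1..n}. squarefree (s i) \<and> \<not> s i dvd 1) \<and>
     (\<forall>i\<in>{1..n}. \<forall>j\<in>{1..n}. i < j \<longrightarrow> k i < k j) \<and>
     c dvd 1 \<and> a = c * (\<Prod>i=1..n. s i ^ (2 ^ k i)))"

definition cond_iv :: "'a::comm_ring_1 \<Rightarrow> bool" where
  "cond_iv a \<longleftrightarrow> (\<exists>(n::nat) (s::nat \<Rightarrow> 'a). n \<ge> 1 \<and>
     (\<forall>i\<in>{1..n}. squarefree (s i)) \<and>
     (\<forall>i. 1 \<le> i \<and> i < n \<longrightarrow> s i dvd s (i+1)) \<and>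
     a = (\<Prod>i=1..n. s i))"

definition cond_v :: "'a::comm_ring_1 \<Rightarrow> bool" where
  "cond_v a \<longleftrightarrow> (\<exists>(n::nat) (s::nat \<Rightarrow> 'a) (k::nat \<Rightarrow> nat) c. n \<ge> 1 \<and>
     (\<forall>i\<in>{1..n}. squarefree (s i) \<and> \<not> s i dvd 1) \<and>
     (\<forall>i\<in>{1..n}. k i \<ge> 1) \<and>
     (\<forall>i. 1 \<le> i \<and> i < n \<longrightarrow> s i dvd s (i+1) \<and> \<not> assoc (s i) (s (i+1))) \<and>
     c dvd 1 \<and> a = c * (\<Prod>i=1..n. s i ^ k i))"

definition cond_vi :: "'a::comm_ring_1 \<Rightarrow> bool" where
  "cond_vi a \<longleftrightarrow> (\<exists>(n::nat) (s::nat \<Rightarrow> 'a). n \<ge> 1 \<and>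
     (\<forall>i\<in>{1..n}. squarefree (s i)) \<and>
     (\<forall>i\<in>{1..n}. \<forall>j\<in>{1..n}. i \<noteq> j \<longrightarrow> relprime (s i) (s j)) \<and>
     a = (\<Prod>i=1..n. s i ^ i))"

definition cond_vii :: "'a::comm_ring_1 \<Rightarrow> bool" where
  "cond_vii a \<longleftrightarrow> (\<exists>(n::nat) (s::nat \<Rightarrow> 'a) (k::nat \<Rightarrow> nat) c. n \<ge> 1 \<and>
     (\<forall>i\<in>{1..n}. squarefree (s i) \<and> \<not> s i dvd 1) \<and>
     1 \<le> k 1 \<and>
     (\<forall>i\<in>{1..n}. \<forall>j\<in>{1..n}. i < j \<longrightarrow> k i < k j) \<and>
     (\<forall>i\<in>{1..n}. \<forall>j\<in>{1..n}. i \<noteq> j \<longrightarrow> relprime (s i) (s j)) \<and>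
     c dvd 1 \<and> a = c * (\<Prod>i=1..n. s i ^ k i))"

end

theory Submission
  imports Defs
begin

lemma unit_pow: "(u::'a::comm_ring_1) dvd 1 \<Longrightarrow> u ^ n dvd 1"
  by (metis power_one dvd_power_same)

lemma unit_mult: "(u::'a::comm_ring_1) dvd 1 \<Longrightarrow> v dvd 1 \<Longrightarrow> u * v dvd 1"
  using mult_dvd_mono[of u 1 v 1] by simp

lemma unit_mult_dvd: "(u::'a::comm_ring_1) dvd 1 \<Longrightarrow> u * x dvd x"
  using mult_dvd_mono[of u 1 x x] by simp

lemma sqf_unit_mult: "(u::'a::comm_ring_1) dvd 1 \<Longrightarrow> squarefree x \<Longrightarrow> squarefree (u*x)"
  unfolding squarefree_def by (meson dvd_trans unit_mult_dvd)

lemma relprime_sym: "relprime x y \<Longrightarrow> relprime y x"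
  unfolding relprime_def by blast

lemma relprime_1: "relprime (1::'a::comm_ring_1) y"
  unfolding relprime_def by blast

lemma relprime_unit_mult: "(u::'a::comm_ring_1) dvd 1 \<Longrightarrow> relprime x y \<Longrightarrow> relprime (u*x) y"
  unfolding relprime_def by (meson dvd_trans unit_mult_dvd)

lemma relprime_dvd: "relprime x y \<Longrightarrow> z dvd y \<Longrightarrow> relprime x z"
  unfolding relprime_def by (meson dvd_trans)

lemma assoc_sym: "assoc (a::'a::comm_ring_1) b \<Longrightarrow> assoc b a"
proof -
  assume "assoc a b"
  then obtain u where u: "u dvd 1" "a = u * b" unfolding assoc_def by blast
  then obtain v where v: "1 = u * v" by (auto elim: dvdE)
  have "b = v * a" using u v by (metis mult.assoc mult.commute mult_1)
  moreover have "v dvd 1" using v by (metis dvdI mult.commute)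
  ultimately show ?thesis unfolding assoc_def by blast
qed

lemma assoc_trans: "assoc (a::'a::comm_ring_1) b \<Longrightarrow> assoc b c \<Longrightarrow> assoc a c"
proof -
  assume "assoc a b" "assoc b c"
  then obtain u v where "u dvd 1" "a = u * b" "v dvd 1" "b = v * c" unfolding assoc_def by blast
  then have "u * v dvd 1" "a = (u * v) * c" by (simp_all add: mult.assoc unit_mult)
  then show ?thesis unfolding assoc_def by blast
qed

lemma assoc_dvd: "assoc (a::'a::comm_ring_1) b \<Longrightarrow> a dvd b"
  unfolding assoc_def using unit_mult_dvd by blast

lemma assoc_refl: "assoc (a::'a::comm_ring_1) a"
  unfolding assoc_def by (rule exI[of _ 1]) simp

lemma d2s:
  fixes s :: "nat \<Rightarrow> 'a::comm_ring_1" and L n :: nat and e :: "nat \<Rightarrow> nat"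
  assumes "L \<le> n"
  shows "(\<Prod>i=L..n. s i ^ e i) dvd 1 \<or> (\<exists>(m::nat) (k::nat\<Rightarrow>nat) c. m \<ge> 1 \<and> c dvd 1 \<and>
     (\<forall>j\<in>{1..m}. L \<le> k j \<and> k j \<le> n \<and> \<not> s (k j) dvd 1) \<and>
     (\<forall>i\<in>{1..m}. \<forall>j\<in>{1..m}. i<j \<longrightarrow> k i < k j) \<and>
     (\<Prod>i=L..n. s i ^ e i) = c * (\<Prod>j=1..m. s (k j) ^ e (k j)))"
  using assms
proof (induction n rule: dec_induct)
  case base
  show ?case
  proof (cases "s L dvd 1")
    case True then have "s L ^ e L dvd 1" by (rule unit_pow)
    then show ?thesis by simp
  next
    case False
    have "(\<Prod>i=L..L. s i ^ e i) = 1 * (\<Prod>j=1..(1::nat). s ((\<lambda>_. L) j) ^ e ((\<lambda>_. L) j))"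
      by simp
    moreover have "\<forall>j\<in>{1..(1::nat)}. L \<le> (\<lambda>_. L) j \<and> (\<lambda>_. L) j \<le> L \<and> \<not> s ((\<lambda>_. L) j) dvd 1"
      using False by simp
    moreover have "\<forall>i\<in>{1..(1::nat)}. \<forall>j\<in>{1..(1::nat)}. i<j \<longrightarrow> (\<lambda>_. L) i < ((\<lambda>_. L) j :: nat)"
      by simp
    moreover have "(1::nat) \<ge> 1" "(1::'a) dvd 1" by simp_all
    ultimately show ?thesis
      apply - apply (rule disjI2) apply (rule exI[where x="1::nat"], rule exI[where x="\<lambda>_. L"], rule exI[where x="1::'a"])
      by (intro conjI; assumption)
  qed
next
  case (step n)
  let ?P = "\<Prod>i=L..n. s i ^ e i"
  let ?x = "s (Suc n) ^ e (Suc n)"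
  have split: "(\<Prod>i=L..Suc n. s i ^ e i) = ?P * ?x"
    using step.hyps by (simp add: prod.nat_ivl_Suc' mult.commute)
  show ?case
  proof (cases "s (Suc n) dvd 1")
    case su: True
    then have xu: "?x dvd 1" by (rule unit_pow)
    from step.IH show ?thesis
    proof
      assume pu: "?P dvd 1"
      have "?P * ?x dvd 1" using pu xu by (rule unit_mult)
      then have "(\<Prod>i=L..Suc n. s i ^ e i) dvd 1" by (simp only: split)
      then show ?thesis by (rule disjI1)
    next
      assume "\<exists>(m::nat) (k::nat\<Rightarrow>nat) c. m \<ge> 1 \<and> c dvd 1 \<and>
       (\<forall>j\<in>{1..m}. L \<le> k j \<and> k j \<le> n \<and> \<not> s (k j) dvd 1) \<and>
       (\<forall>i\<in>{1..m}. \<forall>j\<in>{1..m}. i<j \<longrightarrow> k i < k j) \<and>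
       ?P = c * (\<Prod>j=1..m. s (k j) ^ e (k j))"
      then obtain m :: nat and k :: "nat \<Rightarrow> nat" and c where h: "m \<ge> 1" "c dvd 1"
       "\<forall>j\<in>{1..m}. L \<le> k j \<and> k j \<le> n \<and> \<not> s (k j) dvd 1"
       "\<forall>i\<in>{1..m}. \<forall>j\<in>{1..m}. i<j \<longrightarrow> k i < k j"
       "?P = c * (\<Prod>j=1..m. s (k j) ^ e (k j))" by (elim exE conjE) (rule that; assumption)
      have "(\<Prod>i=L..Suc n. s i ^ e i) = (c * ?x) * (\<Prod>j=1..m. s (k j) ^ e (k j))"
        using split h(5) by (simp add: ac_simps)
      moreover have "c * ?x dvd 1" using h(2) xu by (rule unit_mult)
      moreover have "\<forall>j\<in>{1..m}. L \<le> k j \<and> k j \<le> Suc n \<and> \<not> s (k j) dvd 1"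
        using h(3) by (meson le_SucI)
      ultimately show ?thesis using h(1,4)
      apply - apply (rule disjI2) apply (rule exI[where x=m], rule exI[where x=k], rule exI[where x="c * ?x"])
      by (intro conjI; assumption)
    qed
  next
    case sn: False
    from step.IH show ?thesis
    proof
      assume u: "?P dvd 1"
      have "(\<Prod>i=L..Suc n. s i ^ e i) = ?P * (\<Prod>j=1..(1::nat). s ((\<lambda>_. Suc n) j) ^ e ((\<lambda>_. Suc n) j))"
        using split by simp
      moreover have "\<forall>j\<in>{1..(1::nat)}. L \<le> (\<lambda>_. Suc n) j \<and> (\<lambda>_. Suc n) j \<le> Suc n \<and> \<not> s ((\<lambda>_. Suc n) j) dvd 1"
        using sn step.hyps by simp
      moreover have "\<forall>i\<in>{1..(1::nat)}. \<forall>j\<in>{1..(1::nat)}. i<j \<longrightarrow> (\<lambda>_. Suc n) i < ((\<lambda>_. Suc n) j :: nat)"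
        by simp
      moreover have "(1::nat) \<ge> 1" by simp
      ultimately show ?thesis using u
      apply - apply (rule disjI2) apply (rule exI[where x="1::nat"], rule exI[where x="\<lambda>_. Suc n"], rule exI[where x="?P"])
      by (intro conjI; assumption)
    next
      assume "\<exists>(m::nat) (k::nat\<Rightarrow>nat) c. m \<ge> 1 \<and> c dvd 1 \<and>
       (\<forall>j\<in>{1..m}. L \<le> k j \<and> k j \<le> n \<and> \<not> s (k j) dvd 1) \<and>
       (\<forall>i\<in>{1..m}. \<forall>j\<in>{1..m}. i<j \<longrightarrow> k i < k j) \<and>
       ?P = c * (\<Prod>j=1..m. s (k j) ^ e (k j))"
      then obtain m :: nat and k :: "nat \<Rightarrow> nat" and c where h: "m \<ge> 1" "c dvd 1"
       "\<forall>j\<in>{1..m}. L \<le> k j \<and> k j \<le> n \<and> \<not> s (k j) dvd 1"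
       "\<forall>i\<in>{1..m}. \<forall>j\<in>{1..m}. i<j \<longrightarrow> k i < k j"
       "?P = c * (\<Prod>j=1..m. s (k j) ^ e (k j))" by (elim exE conjE) (rule that; assumption)
      define k' where "k' = k(Suc m := Suc n)"
      have "(\<Prod>j=1..Suc m. s (k' j) ^ e (k' j)) = ?x * (\<Prod>j=1..m. s (k' j) ^ e (k' j))"
        by (simp add: prod.nat_ivl_Suc' k'_def)
      also have "(\<Prod>j=1..m. s (k' j) ^ e (k' j)) = (\<Prod>j=1..m. s (k j) ^ e (k j))"
        by (rule prod.cong) (auto simp: k'_def)
      finally have eq: "(\<Prod>i=L..Suc n. s i ^ e i) = c * (\<Prod>j=1..Suc m. s (k' j) ^ e (k' j))"
        using split h(5) by (simp add: ac_simps)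
      have b: "\<forall>j\<in>{1..Suc m}. L \<le> k' j \<and> k' j \<le> Suc n \<and> \<not> s (k' j) dvd 1"
      proof
        fix j assume j: "j \<in> {1..Suc m}"
        show "L \<le> k' j \<and> k' j \<le> Suc n \<and> \<not> s (k' j) dvd 1"
        proof (cases "j = Suc m")
          case True then show ?thesis using sn step.hyps by (simp add: k'_def)
        next
          case False then have "j \<in> {1..m}" using j by auto
          then have "L \<le> k j \<and> k j \<le> n \<and> \<not> s (k j) dvd 1" using h(3) by blast
          then show ?thesis using False by (simp add: k'_def)
        qed
      qed
      have mo: "\<forall>i\<in>{1..Suc m}. \<forall>j\<in>{1..Suc m}. i<j \<longrightarrow> k' i < k' j"
      proof (intro ballI impI)
        fix i j assume ij: "i \<in> {1..Suc m}" "j \<in> {1..Suc m}" "i < j"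
        show "k' i < k' j"
        proof (cases "j = Suc m")
          case True
          then have "i \<in> {1..m}" using ij by auto
          then have "k i \<le> n" using h(3) by blast
          then show ?thesis using True ij(3) by (simp add: k'_def)
        next
          case False
          then have "i \<in> {1..m}" "j \<in> {1..m}" using ij by auto
          then show ?thesis using h(4) ij(3) by (auto simp: k'_def)
        qed
      qed
      have "Suc m \<ge> 1" by simp
      then show ?thesis using eq b mo h(2)
      apply - apply (rule disjI2) apply (rule exI[where x="Suc m"], rule exI[where x=k'], rule exI[where x=c])
      by (intro conjI; assumption)
    qed
  qed
qed


lemma s2d:
  fixes s :: "nat \<Rightarrow> 'a::comm_ring_1" and k e :: "nat \<Rightarrow> nat" and m L :: nat and c :: 'a
  assumes m: "m \<ge> 1" and mono: "\<forall>i\<in>{1..m}. \<forall>j\<in>{1..m}. i<j \<longrightarrow> k i < k j"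
    and L: "L \<le> k 1" and c: "c dvd 1" and e: "e L = 1"
  shows "\<exists>t. (\<forall>i\<in>{L..k m}. \<exists>u. u dvd 1 \<and> (t i = u \<or> (\<exists>j\<in>{1..m}. k j = i \<and> t i = u * s j)))
          \<and> c * (\<Prod>j=1..m. s j ^ e (k j)) = (\<Prod>i=L..k m. t i ^ e i)"
proof -
  define g where "g i = (if \<exists>j\<in>{1..m}. k j = i then s (THE j. j\<in>{1..m} \<and> k j = i) else 1)" for i
  define t where "t i = (if i = L then c else 1) * g i" for i
  have inj: "inj_on k {1..m}"
  proof (rule inj_onI)
    fix x y assume xy: "x \<in> {1..m}" "y \<in> {1..m}" "k x = k y"
    show "x = y"
    proof (rule ccontr)
      assume "x \<noteq> y"
      then have "x < y \<or> y < x" by arith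
      then show False using mono xy by (metis less_irrefl)
    qed
  qed
  have gk: "g (k j) = s j" if j: "j \<in> {1..m}" for j
  proof -
    have "(THE j'. j'\<in>{1..m} \<and> k j' = k j) = j"
      using j inj by (auto intro!: the_equality dest: inj_onD)
    then show ?thesis using j unfolding g_def by auto
  qed
  have kb: "k 1 \<le> k j \<and> k j \<le> k m" if j: "j \<in> {1..m}" for j
  proof -
    have "1 \<in> {1..m}" "m \<in> {1..m}" using m by auto
    then have a: "1 < j \<longrightarrow> k 1 < k j" and b: "j < m \<longrightarrow> k j < k m" using mono j by blast+
    have "j = 1 \<or> 1 < j" "j = m \<or> j < m" using j by auto
    then show ?thesis using a b by auto
  qed
  have sub: "k ` {1..m} \<subseteq> {L..k m}" using kb L by fastforce
  have g1: "\<forall>i\<in>{L..k m} - k ` {1..m}. g i ^ e i = 1" unfolding g_def by auto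
  have "(\<Prod>i=L..k m. g i ^ e i) = (\<Prod>i\<in>k ` {1..m}. g i ^ e i)"
    using prod.mono_neutral_left[OF _ sub g1] by simp
  also have "\<dots> = (\<Prod>j=1..m. g (k j) ^ e (k j))"
    using prod.reindex[OF inj, of "\<lambda>i. g i ^ e i"] by simp
  also have "\<dots> = (\<Prod>j=1..m. s j ^ e (k j))"
    by (rule prod.cong) (simp_all add: gk)
  finally have P1: "(\<Prod>i=L..k m. g i ^ e i) = (\<Prod>j=1..m. s j ^ e (k j))" .
  have tt: "t i ^ e i = (if i = L then c else 1) * g i ^ e i" for i
    by (cases "i = L") (simp_all add: t_def e)
  have Lin: "L \<in> {L..k m}" using L kb[of 1] m by auto
  have "(\<Prod>i=L..k m. t i ^ e i) = (\<Prod>i=L..k m. (if i = L then c else 1)) * (\<Prod>i=L..k m. g i ^ e i)"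
    unfolding tt by (rule prod.distrib)
  also have "(\<Prod>i=L..k m. (if i = L then c else 1)) = c"
    using Lin by (simp add: prod.delta)
  finally have eq: "c * (\<Prod>j=1..m. s j ^ e (k j)) = (\<Prod>i=L..k m. t i ^ e i)" using P1 by simp
  have A: "\<forall>i\<in>{L..k m}. \<exists>u. u dvd 1 \<and> (t i = u \<or> (\<exists>j\<in>{1..m}. k j = i \<and> t i = u * s j))"
  proof
    fix i assume i: "i \<in> {L..k m}"
    have u: "(if i = L then c else 1) dvd 1" using c by simp
    show "\<exists>u. u dvd 1 \<and> (t i = u \<or> (\<exists>j\<in>{1..m}. k j = i \<and> t i = u * s j))"
    proof (cases "\<exists>j\<in>{1..m}. k j = i")
      case True
      then obtain j where j: "j \<in> {1..m}" "k j = i" by blast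
      then have "t i = (if i = L then c else 1) * s j" unfolding t_def using gk by metis
      then show ?thesis using u j by blast
    next
      case False
      then have "t i = (if i = L then c else 1)" unfolding t_def g_def by simp
      then show ?thesis using u by blast
    qed
  qed
  show ?thesis
    by (rule exI[where x=t], rule conjI[OF A eq])
qed


lemma iv_v:
  fixes s :: "nat \<Rightarrow> 'a::comm_ring_1" and N n :: nat
  assumes sq: "\<forall>i\<in>{1..N}. squarefree (s i)" and ch: "\<forall>i. 1 \<le> i \<and> i < N \<longrightarrow> s i dvd s (i+1)"
    and n1: "1 \<le> n"
  shows "n \<le> N \<Longrightarrow> (\<Prod>i=1..n. s i) dvd 1 \<or> (\<exists>(m::nat) (t::nat\<Rightarrow>'a) (k::nat\<Rightarrow>nat) c. m \<ge> 1 \<and>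
     (\<forall>i\<in>{1..m}. squarefree (t i) \<and> \<not> t i dvd 1) \<and> (\<forall>i\<in>{1..m}. k i \<ge> 1) \<and>
     (\<forall>i. 1 \<le> i \<and> i < m \<longrightarrow> t i dvd t (i+1) \<and> \<not> assoc (t i) (t (i+1))) \<and>
     c dvd 1 \<and> (\<Prod>i=1..n. s i) = c * (\<Prod>i=1..m. t i ^ k i) \<and> assoc (t m) (s n))"
  using n1
proof (induction n rule: nat_induct_at_least)
  case base
  show ?case
  proof (cases "s 1 dvd 1")
    case True then show ?thesis by simp
  next
    case False
    have f1: "(1::nat) \<ge> 1" by simp
    have f2: "\<forall>i\<in>{1..(1::nat)}. squarefree (s 1) \<and> \<not> s 1 dvd 1" using False sq base by auto
    have f3: "\<forall>i\<in>{1..(1::nat)}. (1::nat) \<ge> 1" by simp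
    have f4: "\<forall>i. 1 \<le> i \<and> i < (1::nat) \<longrightarrow> s 1 dvd s 1 \<and> \<not> assoc (s 1) (s 1)" by simp
    have f5: "(1::'a) dvd 1" by simp
    have f6: "(\<Prod>i=1..1. s i) = 1 * (\<Prod>i=1..(1::nat). s 1 ^ 1)" by simp
    have f7: "assoc (s 1) (s 1)" by (rule assoc_refl)
    show ?thesis
      apply (rule disjI2)
      apply (rule exI[where x="1::nat"], rule exI[where x="\<lambda>_. s 1"], rule exI[where x="\<lambda>_. 1::nat"], rule exI[where x="1::'a"])
      by (intro conjI; fact)
  qed
next
  case (Suc n)
  have nN: "n \<le> N" using Suc.prems by simp
  let ?P = "\<Prod>i=1..n. s i"
  have split: "(\<Prod>i=1..Suc n. s i) = s (Suc n) * ?P"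
    using Suc.hyps by (simp add: prod.nat_ivl_Suc')
  have dv: "s n dvd s (Suc n)" using ch Suc.hyps Suc.prems by simp
  have sqS: "squarefree (s (Suc n))" using sq Suc.prems by simp
  from Suc.IH[OF nN] show ?case
  proof
    assume pu: "?P dvd 1"
    show ?thesis
    proof (cases "s (Suc n) dvd 1")
      case True
      then have "s (Suc n) * ?P dvd 1" using pu by (rule unit_mult)
      then show ?thesis unfolding split by (rule disjI1)
    next
      case False
      have f1: "(1::nat) \<ge> 1" by simp
      have f2: "\<forall>i\<in>{1..(1::nat)}. squarefree (s (Suc n)) \<and> \<not> s (Suc n) dvd 1" using False sqS by auto
      have f3: "\<forall>i\<in>{1..(1::nat)}. (1::nat) \<ge> 1" by simp
      have f4: "\<forall>i. 1 \<le> i \<and> i < (1::nat) \<longrightarrow> s (Suc n) dvd s (Suc n) \<and> \<not> assoc (s (Suc n)) (s (Suc n))" by simp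
      have f6: "(\<Prod>i=1..Suc n. s i) = ?P * (\<Prod>i=1..(1::nat). s (Suc n) ^ 1)" using split by simp
      have f7: "assoc (s (Suc n)) (s (Suc n))" by (rule assoc_refl)
      show ?thesis
        apply (rule disjI2)
        apply (rule exI[where x="1::nat"], rule exI[where x="\<lambda>_. s (Suc n)"], rule exI[where x="\<lambda>_. 1::nat"], rule exI[where x="?P"])
        by (intro conjI; fact)
    qed
  next
    assume "\<exists>(m::nat) (t::nat\<Rightarrow>'a) (k::nat\<Rightarrow>nat) c. m \<ge> 1 \<and>
     (\<forall>i\<in>{1..m}. squarefree (t i) \<and> \<not> t i dvd 1) \<and> (\<forall>i\<in>{1..m}. k i \<ge> 1) \<and>
     (\<forall>i. 1 \<le> i \<and> i < m \<longrightarrow> t i dvd t (i+1) \<and> \<not> assoc (t i) (t (i+1))) \<and>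
     c dvd 1 \<and> ?P = c * (\<Prod>i=1..m. t i ^ k i) \<and> assoc (t m) (s n)"
    then obtain m :: nat and t :: "nat \<Rightarrow> 'a" and k :: "nat \<Rightarrow> nat" and c where h: "m \<ge> 1"
     "\<forall>i\<in>{1..m}. squarefree (t i) \<and> \<not> t i dvd 1" "\<forall>i\<in>{1..m}. k i \<ge> 1"
     "\<forall>i. 1 \<le> i \<and> i < m \<longrightarrow> t i dvd t (i+1) \<and> \<not> assoc (t i) (t (i+1))"
     "c dvd 1" "?P = c * (\<Prod>i=1..m. t i ^ k i)" "assoc (t m) (s n)"
      by (elim exE conjE) (rule that; assumption)
    have mm: "m \<in> {1..m}" using h(1) by simp
    have tmu: "\<not> t m dvd 1" using h(2) mm by blast
    show ?thesis
    proof (cases "assoc (s n) (s (Suc n))")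
      case True
      have "assoc (s (Suc n)) (t m)" using assoc_trans[OF h(7) True] by (rule assoc_sym)
      then obtain w where w: "w dvd 1" "s (Suc n) = w * t m" unfolding assoc_def by blast
      define k' where "k' = k(m := Suc (k m))"
      have kk: "t i ^ k' i = t i ^ k i * (if i = m then t m else 1)" for i
        by (simp add: k'_def mult.commute)
      have "(\<Prod>i=1..m. t i ^ k' i) = (\<Prod>i=1..m. t i ^ k i) * (\<Prod>i=1..m. (if i = m then t m else 1))"
        unfolding kk by (rule prod.distrib)
      also have "(\<Prod>i=1..m. (if i = m then t m else 1)) = t m" using mm by (simp add: prod.delta)
      finally have pk: "(\<Prod>i=1..m. t i ^ k' i) = (\<Prod>i=1..m. t i ^ k i) * t m" .
      have f1: "m \<ge> 1" by (rule h(1))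
      have f2: "\<forall>i\<in>{1..m}. squarefree (t i) \<and> \<not> t i dvd 1" by (rule h(2))
      have f3: "\<forall>i\<in>{1..m}. k' i \<ge> 1" using h(3) by (simp add: k'_def)
      have f4: "\<forall>i. 1 \<le> i \<and> i < m \<longrightarrow> t i dvd t (i+1) \<and> \<not> assoc (t i) (t (i+1))" by (rule h(4))
      have f5: "c * w dvd 1" using h(5) w(1) by (rule unit_mult)
      have f6: "(\<Prod>i=1..Suc n. s i) = (c * w) * (\<Prod>i=1..m. t i ^ k' i)"
        unfolding split pk h(6) w(2) by (simp add: ac_simps)
      have f7: "assoc (t m) (s (Suc n))" using h(7) True by (rule assoc_trans)
      show ?thesis
        apply (rule disjI2)
        apply (rule exI[where x=m], rule exI[where x=t], rule exI[where x=k'], rule exI[where x="c * w"])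
        by (intro conjI; fact)
    next
      case False
      define t' where "t' = t(Suc m := s (Suc n))"
      define k' where "k' = k(Suc m := 1)"
      have tmd: "t m dvd s (Suc n)" using assoc_dvd[OF h(7)] dv by (rule dvd_trans)
      have snu: "\<not> s (Suc n) dvd 1"
      proof
        assume "s (Suc n) dvd 1"
        then have "t m dvd 1" using tmd dvd_trans by blast
        then show False using tmu by simp
      qed
      have na: "\<not> assoc (t m) (s (Suc n))"
      proof
        assume "assoc (t m) (s (Suc n))"
        then have "assoc (s n) (s (Suc n))" using assoc_sym[OF h(7)] assoc_trans by blast
        then show False using False by simp
      qed
      have "(\<Prod>i=1..Suc m. t' i ^ k' i) = t' (Suc m) ^ k' (Suc m) * (\<Prod>i=1..m. t' i ^ k' i)"
        by (simp add: prod.nat_ivl_Suc')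
      also have "(\<Prod>i=1..m. t' i ^ k' i) = (\<Prod>i=1..m. t i ^ k i)"
        by (rule prod.cong) (auto simp: t'_def k'_def)
      finally have pk: "(\<Prod>i=1..Suc m. t' i ^ k' i) = s (Suc n) * (\<Prod>i=1..m. t i ^ k i)"
        by (simp add: t'_def k'_def)
      have f1: "Suc m \<ge> 1" by simp
      have f2: "\<forall>i\<in>{1..Suc m}. squarefree (t' i) \<and> \<not> t' i dvd 1"
      proof
        fix i assume i: "i \<in> {1..Suc m}"
        show "squarefree (t' i) \<and> \<not> t' i dvd 1"
        proof (cases "i = Suc m")
          case True then show ?thesis using sqS snu by (simp add: t'_def)
        next
          case False then have "i \<in> {1..m}" using i by auto
          then have "squarefree (t i) \<and> \<not> t i dvd 1" using h(2) by blast
          then show ?thesis using False by (simp add: t'_def)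
        qed
      qed
      have f3: "\<forall>i\<in>{1..Suc m}. k' i \<ge> 1"
      proof
        fix i assume i: "i \<in> {1..Suc m}"
        show "k' i \<ge> 1"
        proof (cases "i = Suc m")
          case True then show ?thesis by (simp add: k'_def)
        next
          case False then have "i \<in> {1..m}" using i by auto
          then have "k i \<ge> 1" using h(3) by blast
          then show ?thesis using False by (simp add: k'_def)
        qed
      qed
      have f4: "\<forall>i. 1 \<le> i \<and> i < Suc m \<longrightarrow> t' i dvd t' (i+1) \<and> \<not> assoc (t' i) (t' (i+1))"
      proof (intro allI impI)
        fix i assume i: "1 \<le> i \<and> i < Suc m"
        show "t' i dvd t' (i+1) \<and> \<not> assoc (t' i) (t' (i+1))"
        proof (cases "i = m")
          case True then show ?thesis using tmd na by (simp add: t'_def)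
        next
          case False then have "1 \<le> i \<and> i < m" using i by auto
          then have "t i dvd t (i+1) \<and> \<not> assoc (t i) (t (i+1))" using h(4) by blast
          then show ?thesis using False i by (simp add: t'_def)
        qed
      qed
      have f5: "c dvd 1" by (rule h(5))
      have f6: "(\<Prod>i=1..Suc n. s i) = c * (\<Prod>i=1..Suc m. t' i ^ k' i)"
        unfolding split pk h(6) by (simp add: ac_simps)
      have f7: "assoc (t' (Suc m)) (s (Suc n))" by (simp add: t'_def assoc_refl)
      show ?thesis
        apply (rule disjI2)
        apply (rule exI[where x="Suc m"], rule exI[where x=t'], rule exI[where x=k'], rule exI[where x=c])
        by (intro conjI; fact)
    qed
  qed
qed


lemma append_pow:
  fixes s :: "nat \<Rightarrow> 'a::comm_ring_1" and n :: nat
  assumes sq: "\<forall>i\<in>{1..n}. squarefree (s i)" and ch: "\<forall>i. 1 \<le> i \<and> i < n \<longrightarrow> s i dvd s (i+1)"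
    and dx: "s n dvd x" and sx: "squarefree x" and n1: "n \<ge> 1"
  shows "\<exists>s'. (\<forall>i\<in>{1..n+j}. squarefree (s' i)) \<and> (\<forall>i. 1 \<le> i \<and> i < n+j \<longrightarrow> s' i dvd s' (i+1)) \<and>
     (\<Prod>i=1..n+j. s' i) = (\<Prod>i=1..n. s i) * x^j \<and> s' (n+j) dvd x"
proof (induction j)
  case 0
  have "(\<Prod>i=1..n+0. s i) = (\<Prod>i=1..n. s i) * x^0" by simp
  then show ?case using sq ch dx
    apply - apply (rule exI[where x=s]) by simp
next
  case (Suc j)
  then obtain s' where h: "\<forall>i\<in>{1..n+j}. squarefree (s' i)" "\<forall>i. 1 \<le> i \<and> i < n+j \<longrightarrow> s' i dvd s' (i+1)"
     "(\<Prod>i=1..n+j. s' i) = (\<Prod>i=1..n. s i) * x^j" "s' (n+j) dvd x" by blast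
  define s'' where "s'' = s'(Suc (n+j) := x)"
  have f1: "\<forall>i\<in>{1..n+Suc j}. squarefree (s'' i)"
  proof
    fix i assume i: "i \<in> {1..n + Suc j}"
    show "squarefree (s'' i)"
    proof (cases "i = Suc (n+j)")
      case True then show ?thesis using sx by (simp add: s''_def)
    next
      case False then have "i \<in> {1..n+j}" using i by auto
      then have "squarefree (s' i)" using h(1) by blast
      then show ?thesis using False by (simp add: s''_def)
    qed
  qed
  have f2: "\<forall>i. 1 \<le> i \<and> i < n + Suc j \<longrightarrow> s'' i dvd s'' (i+1)"
  proof (intro allI impI)
    fix i assume i: "1 \<le> i \<and> i < n + Suc j"
    show "s'' i dvd s'' (i+1)"
    proof (cases "i = n + j")
      case True then show ?thesis using h(4) by (simp add: s''_def)
    next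
      case False then have "1 \<le> i \<and> i < n + j" using i by auto
      then have "s' i dvd s' (i+1)" using h(2) by blast
      then show ?thesis using False i by (simp add: s''_def)
    qed
  qed
  have "(\<Prod>i=1..n+Suc j. s'' i) = s'' (Suc (n+j)) * (\<Prod>i=1..n+j. s'' i)"
    by (simp add: prod.nat_ivl_Suc')
  also have "(\<Prod>i=1..n+j. s'' i) = (\<Prod>i=1..n+j. s' i)"
    by (rule prod.cong) (auto simp: s''_def)
  finally have f3: "(\<Prod>i=1..n+Suc j. s'' i) = (\<Prod>i=1..n. s i) * x^Suc j"
    using h(3) by (simp add: s''_def ac_simps)
  have f4: "s'' (n + Suc j) dvd x" by (simp add: s''_def)
  show ?case
    apply (rule exI[where x=s''])
    by (intro conjI; fact)
qed

lemma v_iv: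
  fixes t :: "nat \<Rightarrow> 'a::comm_ring_1" and k :: "nat \<Rightarrow> nat" and M m :: nat
  assumes sq: "\<forall>i\<in>{1..M}. squarefree (t i)" and kk: "\<forall>i\<in>{1..M}. k i \<ge> 1"
    and ch: "\<forall>i. 1 \<le> i \<and> i < M \<longrightarrow> t i dvd t (i+1)" and c: "c dvd 1" and m1: "1 \<le> m"
  shows "m \<le> M \<Longrightarrow> \<exists>(n::nat) s. n \<ge> 1 \<and> (\<forall>i\<in>{1..n}. squarefree (s i)) \<and>
     (\<forall>i. 1 \<le> i \<and> i < n \<longrightarrow> s i dvd s (i+1)) \<and>
     c * (\<Prod>i=1..m. t i ^ k i) = (\<Prod>i=1..n. s i) \<and> s n dvd t m"
  using m1
proof (induction m rule: nat_induct_at_least)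
  case base
  define s0 where "s0 = (\<lambda>_::nat. c * t 1)"
  have k1: "k 1 \<ge> 1" using kk base by auto
  have st1: "squarefree (t 1)" using sq base by auto
  have a1: "\<forall>i\<in>{1..(1::nat)}. squarefree (s0 i)" using sqf_unit_mult[OF c st1] by (simp add: s0_def)
  have a2: "\<forall>i. 1 \<le> i \<and> i < (1::nat) \<longrightarrow> s0 i dvd s0 (i+1)" by simp
  have a3: "s0 1 dvd t 1" using unit_mult_dvd[OF c] by (simp add: s0_def)
  obtain s' where h: "\<forall>i\<in>{1..1+(k 1 - 1)}. squarefree (s' i)" "\<forall>i. 1 \<le> i \<and> i < 1+(k 1 - 1) \<longrightarrow> s' i dvd s' (i+1)"
     "(\<Prod>i=1..1+(k 1 - 1). s' i) = (\<Prod>i=1..(1::nat). s0 i) * t 1^(k 1 - 1)" "s' (1+(k 1 - 1)) dvd t 1"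
    using append_pow[OF a1 a2 a3 st1, of "k 1 - 1"] by auto
  have kr: "1 + (k 1 - 1) = k 1" using k1 by simp
  have hp: "(\<Prod>i=1..k 1. s' i) = (\<Prod>i=1..(1::nat). s0 i) * t 1^(k 1 - 1)" using h(3) unfolding kr .
  have "(\<Prod>i=1..(1::nat). s0 i) * t 1^(k 1 - 1) = c * (t 1 * t 1 ^ (k 1 - 1))" by (simp add: s0_def)
  also have "t 1 * t 1 ^ (k 1 - 1) = t 1 ^ k 1" using k1 by (metis kr power_Suc plus_1_eq_Suc)
  finally have "c * (\<Prod>i=1..1. t i ^ k i) = (\<Prod>i=1..k 1. s' i)" unfolding hp by simp
  moreover have "k 1 \<ge> 1" by (rule k1)
  moreover have "\<forall>i\<in>{1..k 1}. squarefree (s' i)" using h(1) kr by simp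
  moreover have "\<forall>i. 1 \<le> i \<and> i < k 1 \<longrightarrow> s' i dvd s' (i+1)" using h(2) kr by simp
  moreover have "s' (k 1) dvd t 1" using h(4) kr by simp
  ultimately show ?case
    apply - apply (rule exI[where x="k 1"], rule exI[where x=s'])
    by (intro conjI; assumption)
next
  case (Suc m)
  have mM: "m \<le> M" using Suc.prems by simp
  obtain n :: nat and s :: "nat \<Rightarrow> 'a" where h: "n \<ge> 1" "\<forall>i\<in>{1..n}. squarefree (s i)" "\<forall>i. 1 \<le> i \<and> i < n \<longrightarrow> s i dvd s (i+1)"
     "c * (\<Prod>i=1..m. t i ^ k i) = (\<Prod>i=1..n. s i)" "s n dvd t m"
    using Suc.IH[OF mM] by (elim exE conjE) (rule that; assumption)
  have dv: "t m dvd t (Suc m)" using ch Suc.hyps Suc.prems by simp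
  have sqS: "squarefree (t (Suc m))" using sq Suc.prems by simp
  have dx: "s n dvd t (Suc m)" using h(5) dv by (rule dvd_trans)
  obtain s' where h2: "\<forall>i\<in>{1..n+k (Suc m)}. squarefree (s' i)"
    "\<forall>i. 1 \<le> i \<and> i < n+k (Suc m) \<longrightarrow> s' i dvd s' (i+1)"
    "(\<Prod>i=1..n+k (Suc m). s' i) = (\<Prod>i=1..n. s i) * t (Suc m)^k (Suc m)"
    "s' (n+k (Suc m)) dvd t (Suc m)"
    using append_pow[OF h(2) h(3) dx sqS h(1), of "k (Suc m)"] by (elim exE conjE) (rule that; assumption)
  have "c * (\<Prod>i=1..Suc m. t i ^ k i) = (c * (\<Prod>i=1..m. t i ^ k i)) * t (Suc m) ^ k (Suc m)"
    using Suc.hyps by (simp add: prod.nat_ivl_Suc' ac_simps)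
  also have "\<dots> = (\<Prod>i=1..n+k (Suc m). s' i)" unfolding h(4) h2(3) ..
  finally have "c * (\<Prod>i=1..Suc m. t i ^ k i) = (\<Prod>i=1..n+k (Suc m). s' i)" .
  moreover have "n + k (Suc m) \<ge> 1" using h(1) by simp
  ultimately show ?case using h2(1,2,4)
    apply - apply (rule exI[where x="n + k (Suc m)"], rule exI[where x=s'])
    by (intro conjI; assumption)
qed


lemma iv_vi:
  fixes s :: "nat \<Rightarrow> 'a::comm_ring_1" and N n :: nat
  assumes sq: "\<forall>i\<in>{1..N}. squarefree (s i)" and ch: "\<forall>i. 1 \<le> i \<and> i < N \<longrightarrow> s i dvd s (i+1)"
    and n1: "1 \<le> n"
  shows "n \<le> N \<Longrightarrow> \<exists>r. (\<forall>i\<in>{1..n}. squarefree (r i)) \<and>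
     (\<forall>i\<in>{1..n}. \<forall>j\<in>{1..n}. i \<noteq> j \<longrightarrow> relprime (r i) (r j)) \<and>
     (\<Prod>i=1..n. s i) = (\<Prod>i=1..n. r i ^ i) \<and> (\<Prod>i=1..n. r i) = s n"
  using n1
proof (induction n rule: nat_induct_at_least)
  case base
  have f1: "\<forall>i\<in>{1..(1::nat)}. squarefree (s 1)" using sq base by auto
  have f2: "\<forall>i\<in>{1..(1::nat)}. \<forall>j\<in>{1..(1::nat)}. i \<noteq> j \<longrightarrow> relprime (s 1) (s 1)" by auto
  have f3: "(\<Prod>i=1..(1::nat). s i) = (\<Prod>i=1..(1::nat). s 1 ^ i)" by simp
  have f4: "(\<Prod>i=1..(1::nat). s 1) = s 1" by simp
  show ?case
    apply (rule exI[where x="\<lambda>_. s 1"])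
    by (intro conjI; fact)
next
  case (Suc n)
  have nN: "n \<le> N" using Suc.prems by simp
  obtain r :: "nat \<Rightarrow> 'a" where h: "\<forall>i\<in>{1..n}. squarefree (r i)"
     "\<forall>i\<in>{1..n}. \<forall>j\<in>{1..n}. i \<noteq> j \<longrightarrow> relprime (r i) (r j)"
     "(\<Prod>i=1..n. s i) = (\<Prod>i=1..n. r i ^ i)" "(\<Prod>i=1..n. r i) = s n"
    using Suc.IH[OF nN] by (elim exE conjE) (rule that; assumption)
  have dv: "s n dvd s (Suc n)" using ch Suc.hyps Suc.prems by simp
  then obtain u where u: "s (Suc n) = s n * u" by (elim dvdE)
  have sqS: "squarefree (s (Suc n))" using sq Suc.prems by simp
  have squ: "squarefree u" using squarefree_mono[OF _ sqS] u by simp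
  have rpu: "relprime u (s n)"
    unfolding relprime_def
  proof (intro allI impI)
    fix d assume d: "d dvd u \<and> d dvd s n"
    then have "d * d dvd s n * u" by (simp add: mult_dvd_mono mult.commute)
    then have "d ^ 2 dvd s (Suc n)" unfolding u by (simp add: power2_eq_square)
    then show "d dvd 1" using sqS by (rule squarefreeD[rotated])
  qed
  have rpuj: "relprime u (r j)" if j: "j \<in> {1..n}" for j
  proof -
    have "r j dvd (\<Prod>i=1..n. r i)" using j by (intro dvd_prodI) auto
    then have "r j dvd s n" using h(4) by simp
    then show ?thesis using rpu by (rule relprime_dvd[rotated])
  qed
  define r' where "r' i = (if i = 1 then u else r (i - 1))" for i
  have r'S: "r' (Suc i) = r i" if "i \<ge> 1" for i using that by (simp add: r'_def)
  have f1: "\<forall>i\<in>{1..Suc n}. squarefree (r' i)"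
  proof
    fix i assume i: "i \<in> {1..Suc n}"
    show "squarefree (r' i)"
    proof (cases "i = 1")
      case True then show ?thesis using squ by (simp add: r'_def)
    next
      case False then have "i - 1 \<in> {1..n}" using i by auto
      then have "squarefree (r (i - 1))" using h(1) by blast
      then show ?thesis using False by (simp add: r'_def)
    qed
  qed
  have f2: "\<forall>i\<in>{1..Suc n}. \<forall>j\<in>{1..Suc n}. i \<noteq> j \<longrightarrow> relprime (r' i) (r' j)"
  proof (intro ballI impI)
    fix i j assume i: "i \<in> {1..Suc n}" and j: "j \<in> {1..Suc n}" and ij: "i \<noteq> j"
    show "relprime (r' i) (r' j)"
    proof (cases "i = 1")
      case True
      then have "j - 1 \<in> {1..n}" "j \<noteq> 1" using j ij by auto
      then show ?thesis using True rpuj by (simp add: r'_def)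
    next
      case False
      then have i1: "i - 1 \<in> {1..n}" using i by auto
      show ?thesis
      proof (cases "j = 1")
        case True
        then have "relprime u (r (i - 1))" using rpuj i1 by blast
        then show ?thesis using True False by (simp add: r'_def relprime_sym)
      next
        case False2: False
        then have j1: "j - 1 \<in> {1..n}" using j by auto
        have "i - 1 \<noteq> j - 1" using ij i j by auto
        then have "relprime (r (i - 1)) (r (j - 1))" using h(2) i1 j1 by blast
        then show ?thesis using False False2 by (simp add: r'_def)
      qed
    qed
  qed
  have p1: "(\<Prod>i=1..Suc n. r' i ^ i) = u * (\<Prod>i=1..n. r i ^ Suc i)"
  proof -
    have "(\<Prod>i=1..Suc n. r' i ^ i) = r' 1 ^ 1 * (\<Prod>i=Suc 1..Suc n. r' i ^ i)"
      by (rule prod.atLeast_Suc_atMost) simp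
    also have "(\<Prod>i=Suc 1..Suc n. r' i ^ i) = (\<Prod>i=1..n. r' (Suc i) ^ Suc i)"
      by (rule prod.shift_bounds_cl_Suc_ivl)
    also have "\<dots> = (\<Prod>i=1..n. r i ^ Suc i)"
      by (rule prod.cong) (simp_all add: r'S)
    finally show ?thesis by (simp add: r'_def)
  qed
  have p2: "(\<Prod>i=1..n. r i ^ Suc i) = (\<Prod>i=1..n. r i) * (\<Prod>i=1..n. r i ^ i)"
    by (simp add: prod.distrib[symmetric])
  have f3: "(\<Prod>i=1..Suc n. s i) = (\<Prod>i=1..Suc n. r' i ^ i)"
    unfolding p1 p2 h(4) h(3)[symmetric] using Suc.hyps u by (simp add: prod.nat_ivl_Suc' ac_simps)
  have f4: "(\<Prod>i=1..Suc n. r' i) = s (Suc n)"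
  proof -
    have "(\<Prod>i=1..Suc n. r' i) = r' 1 * (\<Prod>i=Suc 1..Suc n. r' i)"
      by (rule prod.atLeast_Suc_atMost) simp
    also have "(\<Prod>i=Suc 1..Suc n. r' i) = (\<Prod>i=1..n. r' (Suc i))"
      by (rule prod.shift_bounds_cl_Suc_ivl)
    also have "\<dots> = (\<Prod>i=1..n. r i)"
      by (rule prod.cong) (simp_all add: r'S)
    finally show ?thesis using h(4) u by (simp add: r'_def mult.commute)
  qed
  show ?case
    apply (rule exI[where x=r'])
    by (intro conjI; fact)
qed


lemma relprime_unit: "(u::'a::comm_ring_1) dvd 1 \<Longrightarrow> relprime u y"
  unfolding relprime_def by (meson dvd_trans)

lemma sqf_unit: "(u::'a::comm_ring_1) dvd 1 \<Longrightarrow> squarefree u"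
  unfolding squarefree_def power2_eq_square by (meson dvd_mult_left dvd_trans)

lemma sqf_A:
  fixes s :: "nat \<Rightarrow> 'a::comm_ring_1"
  assumes "\<exists>u. u dvd 1 \<and> (x = u \<or> (\<exists>j\<in>J. k j = i \<and> x = u * s j))" "\<forall>j\<in>J. squarefree (s j)"
  shows "squarefree x"
proof -
  obtain u where u: "u dvd 1" "x = u \<or> (\<exists>j\<in>J. k j = i \<and> x = u * s j)"
    using assms(1) by (elim exE conjE) (rule that; assumption)
  show ?thesis
  proof (cases "x = u")
    case True then show ?thesis using sqf_unit[OF u(1)] by simp
  next
    case False
    then have "\<exists>j\<in>J. k j = i \<and> x = u * s j" using u(2) by simp
    then obtain j where j: "j \<in> J" "x = u * s j" by (elim bexE conjE) (rule that; assumption)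
    have "squarefree (s j)" using assms(2) j(1) by simp
    then show ?thesis unfolding j(2) by (rule sqf_unit_mult[OF u(1)])
  qed
qed

lemma relprime_A:
  fixes s :: "nat \<Rightarrow> 'a::comm_ring_1"
  assumes x: "\<exists>u. u dvd 1 \<and> (x = u \<or> (\<exists>j\<in>J. k j = i \<and> x = u * s j))"
    and y: "\<exists>u. u dvd 1 \<and> (y = u \<or> (\<exists>j\<in>J. k j = i' \<and> y = u * s j))"
    and ii: "i \<noteq> i'" and rp: "\<forall>j\<in>J. \<forall>j'\<in>J. j \<noteq> j' \<longrightarrow> relprime (s j) (s j')"
  shows "relprime x y"
proof -
  obtain u where u: "u dvd 1" "x = u \<or> (\<exists>j\<in>J. k j = i \<and> x = u * s j)"
    using x by (elim exE conjE) (rule that; assumption)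
  obtain v where v: "v dvd 1" "y = v \<or> (\<exists>j\<in>J. k j = i' \<and> y = v * s j)"
    using y by (elim exE conjE) (rule that; assumption)
  show ?thesis
  proof (cases "x = u")
    case True then show ?thesis using relprime_unit[OF u(1)] by simp
  next
    case False
    then have "\<exists>j\<in>J. k j = i \<and> x = u * s j" using u(2) by simp
    then obtain j where j: "j \<in> J" "k j = i" "x = u * s j" by (elim bexE conjE) (rule that; assumption)
    show ?thesis
    proof (cases "y = v")
      case True then show ?thesis using relprime_sym[OF relprime_unit[OF v(1)]] by simp
    next
      case False
      then have "\<exists>j\<in>J. k j = i' \<and> y = v * s j" using v(2) by simp
      then obtain j' where j': "j' \<in> J" "k j' = i'" "y = v * s j'" by (elim bexE conjE) (rule that; assumption)
      have "j \<noteq> j'" using j(2) j'(2) ii by auto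
      then have "relprime (s j) (s j')" using rp j(1) j'(1) by simp
      then have "relprime (u * s j) (s j')" by (rule relprime_unit_mult[OF u(1)])
      then have "relprime (v * s j') (u * s j)" by (rule relprime_unit_mult[OF v(1) relprime_sym])
      then show ?thesis unfolding j(3) j'(3) by (rule relprime_sym)
    qed
  qed
qed

lemma ii_i: "cond_ii (a::'a::comm_ring_1) \<Longrightarrow> cond_i a"
proof -
  assume "cond_ii a"
  then obtain n :: nat and s :: "nat \<Rightarrow> 'a" where sq: "\<forall>i\<in>{0..n}. squarefree (s i)"
    and eq: "a = (\<Prod>i=0..n. s i ^ (2^i))" unfolding cond_ii_def by (elim exE conjE) (rule that; assumption)
  define b where "b = (\<Prod>i=1..n. s i ^ (2^(i-1)))"
  have "b^2 = (\<Prod>i=1..n. (s i ^ (2^(i-1)))^2)" unfolding b_def by (rule prod_power_distrib)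
  also have "\<dots> = (\<Prod>i=1..n. s i ^ (2^i))"
  proof (rule prod.cong)
    fix i assume "i \<in> {1..n}"
    then obtain j where j: "i = Suc j" by (cases i) auto
    show "(s i ^ (2^(i-1)))^2 = s i ^ (2^i)" unfolding j by (simp add: power_mult[symmetric] mult.commute)
  qed simp
  finally have b2: "b^2 = (\<Prod>i=1..n. s i ^ (2^i))" .
  have "a = s 0 ^ (2^0) * (\<Prod>i=Suc 0..n. s i ^ (2^i))" unfolding eq by (rule prod.atLeast_Suc_atMost) simp
  then have "a = b^2 * s 0" using b2 by (simp add: mult.commute)
  moreover have "squarefree (s 0)" using sq by auto
  ultimately show ?thesis unfolding cond_i_def by blast
qed

lemma ii_iii: "\<not> (a::'a::comm_ring_1) dvd 1 \<Longrightarrow> cond_ii a \<Longrightarrow> cond_iii a"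
proof -
  assume na: "\<not> a dvd 1" and "cond_ii a"
  then obtain n :: nat and s :: "nat \<Rightarrow> 'a" where sq: "\<forall>i\<in>{0..n}. squarefree (s i)"
    and eq: "a = (\<Prod>i=0..n. s i ^ (2^i))" unfolding cond_ii_def by (elim exE conjE) (rule that; assumption)
  from d2s[of 0 n s "\<lambda>i. 2^i", OF le0] show ?thesis
  proof
    assume "(\<Prod>i=0..n. s i ^ (2^i)) dvd 1" then show ?thesis using na eq by simp
  next
    assume "\<exists>(m::nat) (k::nat\<Rightarrow>nat) c. m \<ge> 1 \<and> c dvd 1 \<and>
     (\<forall>j\<in>{1..m}. 0 \<le> k j \<and> k j \<le> n \<and> \<not> s (k j) dvd 1) \<and>
     (\<forall>i\<in>{1..m}. \<forall>j\<in>{1..m}. i<j \<longrightarrow> k i < k j) \<and>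
     (\<Prod>i=0..n. s i ^ (2^i)) = c * (\<Prod>j=1..m. s (k j) ^ (2^(k j)))"
    then obtain m :: nat and k :: "nat \<Rightarrow> nat" and c where h: "m \<ge> 1" "c dvd 1"
     "\<forall>j\<in>{1..m}. 0 \<le> k j \<and> k j \<le> n \<and> \<not> s (k j) dvd 1"
     "\<forall>i\<in>{1..m}. \<forall>j\<in>{1..m}. i<j \<longrightarrow> k i < k j"
     "(\<Prod>i=0..n. s i ^ (2^i)) = c * (\<Prod>j=1..m. s (k j) ^ (2^(k j)))"
      by (elim exE conjE) (rule that; assumption)
    have f2: "\<forall>i\<in>{1..m}. squarefree (s (k i)) \<and> \<not> s (k i) dvd 1"
    proof
      fix i assume "i \<in> {1..m}"
      then have "k i \<le> n \<and> \<not> s (k i) dvd 1" using h(3) by blast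
      then show "squarefree (s (k i)) \<and> \<not> s (k i) dvd 1" using sq by auto
    qed
    have f5: "a = c * (\<Prod>j=1..m. s (k j) ^ (2^(k j)))" using eq h(5) by simp
    show ?thesis unfolding cond_iii_def
      apply (rule exI[where x=m], rule exI[where x="\<lambda>j. s (k j)"], rule exI[where x=k], rule exI[where x=c])
      by (intro conjI; fact)
  qed
qed

lemma iii_ii: "cond_iii (a::'a::comm_ring_1) \<Longrightarrow> cond_ii a"
proof -
  assume "cond_iii a"
  then obtain n :: nat and s :: "nat \<Rightarrow> 'a" and k :: "nat \<Rightarrow> nat" and c where h: "n \<ge> 1"
     "\<forall>i\<in>{1..n}. squarefree (s i) \<and> \<not> s i dvd 1"
     "\<forall>i\<in>{1..n}. \<forall>j\<in>{1..n}. i < j \<longrightarrow> k i < k j"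
     "c dvd 1" "a = c * (\<Prod>i=1..n. s i ^ (2 ^ k i))" unfolding cond_iii_def
    by (elim exE conjE) (rule that; assumption)
  obtain t :: "nat \<Rightarrow> 'a" where A: "\<forall>i\<in>{0..k n}. \<exists>u. u dvd 1 \<and> (t i = u \<or> (\<exists>j\<in>{1..n}. k j = i \<and> t i = u * s j))"
    and eq: "c * (\<Prod>j=1..n. s j ^ (2^(k j))) = (\<Prod>i=0..k n. t i ^ (2^i))"
    using s2d[of n k 0 c "\<lambda>i. 2^i" s, OF h(1) h(3) le0 h(4) power_0] by (elim exE conjE) (rule that; assumption)
  have sqs: "\<forall>j\<in>{1..n}. squarefree (s j)" using h(2) by blast
  have f1: "\<forall>i\<in>{0..k n}. squarefree (t i)"
  proof
    fix i assume "i \<in> {0..k n}"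
    then have "\<exists>u. u dvd 1 \<and> (t i = u \<or> (\<exists>j\<in>{1..n}. k j = i \<and> t i = u * s j))" using A by blast
    then show "squarefree (t i)" using sqs by (rule sqf_A)
  qed
  have f2: "a = (\<Prod>i=0..k n. t i ^ (2^i))" using h(5) eq by simp
  show ?thesis unfolding cond_ii_def
    apply (rule exI[where x="k n"], rule exI[where x=t])
    by (intro conjI; fact)
qed


lemma iv_v': "\<not> (a::'a::comm_ring_1) dvd 1 \<Longrightarrow> cond_iv a \<Longrightarrow> cond_v a"
proof -
  assume na: "\<not> a dvd 1" and "cond_iv a"
  then obtain n :: nat and s :: "nat \<Rightarrow> 'a" where h: "n \<ge> 1" "\<forall>i\<in>{1..n}. squarefree (s i)"
    "\<forall>i. 1 \<le> i \<and> i < n \<longrightarrow> s i dvd s (i+1)" "a = (\<Prod>i=1..n. s i)"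
    unfolding cond_iv_def by (elim exE conjE) (rule that; assumption)
  from iv_v[OF h(2) h(3) h(1) order_refl] show ?thesis
  proof
    assume "(\<Prod>i=1..n. s i) dvd 1" then show ?thesis using na h(4) by simp
  next
    assume "\<exists>(m::nat) (t::nat\<Rightarrow>'a) (k::nat\<Rightarrow>nat) c. m \<ge> 1 \<and>
     (\<forall>i\<in>{1..m}. squarefree (t i) \<and> \<not> t i dvd 1) \<and> (\<forall>i\<in>{1..m}. k i \<ge> 1) \<and>
     (\<forall>i. 1 \<le> i \<and> i < m \<longrightarrow> t i dvd t (i+1) \<and> \<not> assoc (t i) (t (i+1))) \<and>
     c dvd 1 \<and> (\<Prod>i=1..n. s i) = c * (\<Prod>i=1..m. t i ^ k i) \<and> assoc (t m) (s n)"
    then obtain m :: nat and t :: "nat \<Rightarrow> 'a" and k :: "nat \<Rightarrow> nat" and c where g: "m \<ge> 1"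
     "\<forall>i\<in>{1..m}. squarefree (t i) \<and> \<not> t i dvd 1" "\<forall>i\<in>{1..m}. k i \<ge> 1"
     "\<forall>i. 1 \<le> i \<and> i < m \<longrightarrow> t i dvd t (i+1) \<and> \<not> assoc (t i) (t (i+1))"
     "c dvd 1" "(\<Prod>i=1..n. s i) = c * (\<Prod>i=1..m. t i ^ k i)"
      by (elim exE conjE) (rule that; assumption)
    have f6: "a = c * (\<Prod>i=1..m. t i ^ k i)" using h(4) g(6) by simp
    show ?thesis unfolding cond_v_def
      apply (rule exI[where x=m], rule exI[where x=t], rule exI[where x=k], rule exI[where x=c])
      by (intro conjI; fact)
  qed
qed

lemma v_iv': "cond_v (a::'a::comm_ring_1) \<Longrightarrow> cond_iv a"
proof -
  assume "cond_v a"
  then obtain m :: nat and t :: "nat \<Rightarrow> 'a" and k :: "nat \<Rightarrow> nat" and c where g: "m \<ge> 1"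
     "\<forall>i\<in>{1..m}. squarefree (t i) \<and> \<not> t i dvd 1" "\<forall>i\<in>{1..m}. k i \<ge> 1"
     "\<forall>i. 1 \<le> i \<and> i < m \<longrightarrow> t i dvd t (i+1) \<and> \<not> assoc (t i) (t (i+1))"
     "c dvd 1" "a = c * (\<Prod>i=1..m. t i ^ k i)"
    unfolding cond_v_def by (elim exE conjE) (rule that; assumption)
  have sq: "\<forall>i\<in>{1..m}. squarefree (t i)" using g(2) by blast
  have ch: "\<forall>i. 1 \<le> i \<and> i < m \<longrightarrow> t i dvd t (i+1)" using g(4) by blast
  obtain n :: nat and s :: "nat \<Rightarrow> 'a" where h: "n \<ge> 1" "\<forall>i\<in>{1..n}. squarefree (s i)"
     "\<forall>i. 1 \<le> i \<and> i < n \<longrightarrow> s i dvd s (i+1)"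
     "c * (\<Prod>i=1..m. t i ^ k i) = (\<Prod>i=1..n. s i)" "s n dvd t m"
    using v_iv[OF sq g(3) ch g(5) g(1) order_refl] by (elim exE conjE) (rule that; assumption)
  have f4: "a = (\<Prod>i=1..n. s i)" using g(6) h(4) by simp
  show ?thesis unfolding cond_iv_def
    apply (rule exI[where x=n], rule exI[where x=s])
    by (intro conjI; fact)
qed

lemma iv_vi': "cond_iv (a::'a::comm_ring_1) \<Longrightarrow> cond_vi a"
proof -
  assume "cond_iv a"
  then obtain n :: nat and s :: "nat \<Rightarrow> 'a" where h: "n \<ge> 1" "\<forall>i\<in>{1..n}. squarefree (s i)"
    "\<forall>i. 1 \<le> i \<and> i < n \<longrightarrow> s i dvd s (i+1)" "a = (\<Prod>i=1..n. s i)"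
    unfolding cond_iv_def by (elim exE conjE) (rule that; assumption)
  obtain r :: "nat \<Rightarrow> 'a" where g: "\<forall>i\<in>{1..n}. squarefree (r i)"
     "\<forall>i\<in>{1..n}. \<forall>j\<in>{1..n}. i \<noteq> j \<longrightarrow> relprime (r i) (r j)"
     "(\<Prod>i=1..n. s i) = (\<Prod>i=1..n. r i ^ i)" "(\<Prod>i=1..n. r i) = s n"
    using iv_vi[OF h(2) h(3) h(1) order_refl] by (elim exE conjE) (rule that; assumption)
  have f4: "a = (\<Prod>i=1..n. r i ^ i)" using h(4) g(3) by simp
  show ?thesis unfolding cond_vi_def
    apply (rule exI[where x=n], rule exI[where x=r])
    by (intro conjI; fact)
qed

lemma vi_vii: "\<not> (a::'a::comm_ring_1) dvd 1 \<Longrightarrow> cond_vi a \<Longrightarrow> cond_vii a"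
proof -
  assume na: "\<not> a dvd 1" and "cond_vi a"
  then obtain n :: nat and s :: "nat \<Rightarrow> 'a" where h: "n \<ge> 1" "\<forall>i\<in>{1..n}. squarefree (s i)"
    "\<forall>i\<in>{1..n}. \<forall>j\<in>{1..n}. i \<noteq> j \<longrightarrow> relprime (s i) (s j)" "a = (\<Prod>i=1..n. s i ^ i)"
    unfolding cond_vi_def by (elim exE conjE) (rule that; assumption)
  from d2s[of 1 n s "\<lambda>i. i", OF h(1)] show ?thesis
  proof
    assume "(\<Prod>i=1..n. s i ^ i) dvd 1" then show ?thesis using na h(4) by simp
  next
    assume "\<exists>(m::nat) (k::nat\<Rightarrow>nat) c. m \<ge> 1 \<and> c dvd 1 \<and>
     (\<forall>j\<in>{1..m}. 1 \<le> k j \<and> k j \<le> n \<and> \<not> s (k j) dvd 1) \<and>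
     (\<forall>i\<in>{1..m}. \<forall>j\<in>{1..m}. i<j \<longrightarrow> k i < k j) \<and>
     (\<Prod>i=1..n. s i ^ i) = c * (\<Prod>j=1..m. s (k j) ^ k j)"
    then obtain m :: nat and k :: "nat \<Rightarrow> nat" and c where g: "m \<ge> 1" "c dvd 1"
     "\<forall>j\<in>{1..m}. 1 \<le> k j \<and> k j \<le> n \<and> \<not> s (k j) dvd 1"
     "\<forall>i\<in>{1..m}. \<forall>j\<in>{1..m}. i<j \<longrightarrow> k i < k j"
     "(\<Prod>i=1..n. s i ^ i) = c * (\<Prod>j=1..m. s (k j) ^ k j)"
      by (elim exE conjE) (rule that; assumption)
    have kin: "k i \<in> {1..n}" "\<not> s (k i) dvd 1" if "i \<in> {1..m}" for i
      using g(3) that by auto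
    have f2: "\<forall>i\<in>{1..m}. squarefree (s (k i)) \<and> \<not> s (k i) dvd 1"
      using kin h(2) by blast
    have f3: "1 \<le> k 1" using kin(1)[of 1] g(1) by simp
    have f5: "\<forall>i\<in>{1..m}. \<forall>j\<in>{1..m}. i \<noteq> j \<longrightarrow> relprime (s (k i)) (s (k j))"
    proof (intro ballI impI)
      fix i j assume i: "i \<in> {1..m}" and j: "j \<in> {1..m}" and ij: "i \<noteq> j"
      have "i < j \<or> j < i" using ij by arith
      then have "k i \<noteq> k j" using g(4) i j by (metis less_irrefl)
      then show "relprime (s (k i)) (s (k j))" using h(3) kin(1)[OF i] kin(1)[OF j] by blast
    qed
    have f6: "a = c * (\<Prod>j=1..m. s (k j) ^ k j)" using h(4) g(5) by simp
    show ?thesis unfolding cond_vii_def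
      apply (rule exI[where x=m], rule exI[where x="\<lambda>j. s (k j)"], rule exI[where x=k], rule exI[where x=c])
      by (intro conjI; fact)
  qed
qed

lemma vii_vi: "cond_vii (a::'a::comm_ring_1) \<Longrightarrow> cond_vi a"
proof -
  assume "cond_vii a"
  then obtain n :: nat and s :: "nat \<Rightarrow> 'a" and k :: "nat \<Rightarrow> nat" and c where h: "n \<ge> 1"
     "\<forall>i\<in>{1..n}. squarefree (s i) \<and> \<not> s i dvd 1" "1 \<le> k 1"
     "\<forall>i\<in>{1..n}. \<forall>j\<in>{1..n}. i < j \<longrightarrow> k i < k j"
     "\<forall>i\<in>{1..n}. \<forall>j\<in>{1..n}. i \<noteq> j \<longrightarrow> relprime (s i) (s j)"
     "c dvd 1" "a = c * (\<Prod>i=1..n. s i ^ k i)" unfolding cond_vii_def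
    by (elim exE conjE) (rule that; assumption)
  have e1: "(\<lambda>i::nat. i) 1 = 1" by simp
  obtain t :: "nat \<Rightarrow> 'a" where A: "\<forall>i\<in>{1..k n}. \<exists>u. u dvd 1 \<and> (t i = u \<or> (\<exists>j\<in>{1..n}. k j = i \<and> t i = u * s j))"
    and eq: "c * (\<Prod>j=1..n. s j ^ k j) = (\<Prod>i=1..k n. t i ^ i)"
    using s2d[of n k 1 c "\<lambda>i. i" s, OF h(1) h(4) h(3) h(6) e1] by (elim exE conjE) (rule that; assumption)
  have sqs: "\<forall>j\<in>{1..n}. squarefree (s j)" using h(2) by blast
  have kn: "k n \<ge> 1"
  proof (cases "n = 1")
    case True then show ?thesis using h(3) by simp
  next
    case False
    then have "k 1 < k n" using h(1) h(4) by auto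
    then show ?thesis using h(3) by simp
  qed
  have f2: "\<forall>i\<in>{1..k n}. squarefree (t i)"
  proof
    fix i assume "i \<in> {1..k n}"
    then have "\<exists>u. u dvd 1 \<and> (t i = u \<or> (\<exists>j\<in>{1..n}. k j = i \<and> t i = u * s j))" using A by blast
    then show "squarefree (t i)" using sqs by (rule sqf_A)
  qed
  have f3: "\<forall>i\<in>{1..k n}. \<forall>j\<in>{1..k n}. i \<noteq> j \<longrightarrow> relprime (t i) (t j)"
  proof (intro ballI impI)
    fix i j assume i: "i \<in> {1..k n}" and j: "j \<in> {1..k n}" and ij: "i \<noteq> j"
    have Ai: "\<exists>u. u dvd 1 \<and> (t i = u \<or> (\<exists>j'\<in>{1..n}. k j' = i \<and> t i = u * s j'))" using A i by blast
    have Aj: "\<exists>u. u dvd 1 \<and> (t j = u \<or> (\<exists>j'\<in>{1..n}. k j' = j \<and> t j = u * s j'))" using A j by blast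
    show "relprime (t i) (t j)" using relprime_A[OF Ai Aj ij h(5)] .
  qed
  have f4: "a = (\<Prod>i=1..k n. t i ^ i)" using h(7) eq by simp
  show ?thesis unfolding cond_vi_def
    apply (rule exI[where x="k n"], rule exI[where x=t])
    by (intro conjI; fact)
qed

theorem proposition1:
  fixes a :: "'a::comm_ring_1"
  assumes "a \<noteq> 0" and "\<not> a dvd 1"
  shows "(cond_ii a \<longrightarrow> cond_i a) \<and>
         (cond_ii a \<longleftrightarrow> cond_iii a) \<and>
         (cond_iv a \<longleftrightarrow> cond_v a) \<and>
         (cond_v a \<longrightarrow> cond_vi a) \<and>
         (cond_vi a \<longleftrightarrow> cond_vii a)"
  using ii_i ii_iii[OF assms(2)] iii_ii iv_v'[OF assms(2)] v_iv' iv_vi' vi_vii[OF assms(2)] vii_vi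
  by blast

end
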